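(* For every natural number $n$, $$\Phi^*_n(x)=\prod_{\substack{d\mid n\\ \kappa(d)=\kappa(n)}}\Phi_d(x).$$ Equivalently, $\Phi^*_n(x)=\prod_{d\mid n/\kappa(n)}\Phi_{\kappa(n)}(x^d)$.
   Context: $\Phi_d(x)=\prod_{1\le j\le d,\ \gcd(j,d)=1}(x-\zeta_d^j)$ is the $d$-th cyclotomic polynomial, $\zeta_d=e^{2\pi i/d}$. A divisor $d$ of $n$ is unitary, $d\mid\mid n$, if $\gcd(d,n/d)=1$; $(j,n)_*=\max\{d: d\mid j,\ d\mid\mid n\}$; the unitary cyclotomic polynomial is $\Phi^*_n(x)=\prod_{1\le j\le n,\ (j,n)_*=1}(x-\zeta_n^j)$. $\kappa(n)=\prod_{p\mid n}p$ denotes the squarefree kernel of $n$ (with $\kappa(1)=1$). *)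

theory Defs
  imports "HOL-Complex_Analysis.Complex_Analysis" "HOL-Computational_Algebra.Computational_Algebra"
begin

definition zeta :: "nat \<Rightarrow> complex" where
  "zeta d = exp (2 * of_real pi * \<i> / of_nat d)"

definition cyclotomic :: "nat \<Rightarrow> complex poly" where
  "cyclotomic d = (\<Prod>j\<in>{j\<in>{1..d}. gcd j d = 1}. [:- (zeta d ^ j), 1:])"

definition unitary_dvd :: "nat \<Rightarrow> nat \<Rightarrow> bool" where
  "unitary_dvd d n \<longleftrightarrow> d dvd n \<and> gcd d (n div d) = 1"

definition ugcd :: "nat \<Rightarrow> nat \<Rightarrow> nat" where
  "ugcd j n = Max {d. d dvd j \<and> unitary_dvd d n}"

definition unitary_cyclotomic :: "nat \<Rightarrow> complex poly" where
  "unitary_cyclotomic n = (\<Prod>j\<in>{j\<in>{1..n}. ugcd j n = 1}. [:- (zeta n ^ j), 1:])"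

definition sqf_kernel :: "nat \<Rightarrow> nat" where
  "sqf_kernel n = \<Prod>(prime_factors n)"

end

theory Submission
  imports Defs "HOL-Number_Theory.Totient"
begin


lemma pf_kernel: "n > 0 \<Longrightarrow> prime_factors (sqf_kernel n) = prime_factors n"
proof -
  assume n: "n > 0"
  have "prime_factors (prod id (prime_factors n)) = \<Union>((prime_factors \<circ> id) ` prime_factors n)"
    by (rule prime_factors_prod) (auto dest: in_prime_factors_imp_prime)
  also have "\<dots> = prime_factors n"
  proof -
    have "\<And>q. q \<in> prime_factors n \<Longrightarrow> prime_factors q = {q}"
      by (simp add: prime_factorization_prime in_prime_factors_imp_prime)
    then show ?thesis by auto
  qed
  finally show ?thesis by (simp add: sqf_kernel_def id_def)
qed

lemma kernel_pos: "sqf_kernel n > 0"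
  unfolding sqf_kernel_def by (auto intro!: prod_pos prime_gt_0_nat dest: in_prime_factors_imp_prime)

lemma kernel_dvd: "n > 0 \<Longrightarrow> sqf_kernel n dvd n"
proof -
  assume n: "n > 0"
  have "(\<Prod>p\<in>prime_factors n. p) dvd (\<Prod>p\<in>prime_factors n. p ^ multiplicity p n)"
    by (rule prod_dvd_prod) (auto intro!: dvd_power simp: prime_factors_multiplicity)
  also have "\<dots> = n" using n by (rule prime_factorization_nat[symmetric])
  finally show ?thesis by (simp add: sqf_kernel_def)
qed

lemma kernel_eq_iff: "a > 0 \<Longrightarrow> b > 0 \<Longrightarrow> sqf_kernel a = sqf_kernel b \<longleftrightarrow> prime_factors a = prime_factors b"
  by (metis pf_kernel sqf_kernel_def)



lemma ugcd_iff:
  fixes j n :: nat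
  assumes j: "j > 0" and n: "n > 0"
  shows "ugcd j n = 1 \<longleftrightarrow> (\<forall>p. prime p \<longrightarrow> p dvd n \<longrightarrow> p dvd (n div gcd j n))"
proof -
  define g where "g = gcd j n"
  define A where "A = {d. d dvd j \<and> unitary_dvd d n}"
  have "A \<subseteq> {..j}" unfolding A_def using j by (auto intro: dvd_imp_le)
  hence finA: "finite A" by (rule finite_subset) simp
  have oneA: "1 \<in> A" unfolding A_def unitary_dvd_def by simp
  have g0: "g > 0" using n by (simp add: g_def)
  have ng: "n = g * (n div g)" unfolding g_def by (metis dvd_mult_div_cancel gcd_dvd2)
  show ?thesis
  proof
    assume u: "ugcd j n = 1"
    show "\<forall>p. prime p \<longrightarrow> p dvd n \<longrightarrow> p dvd (n div gcd j n)"
    proof (intro allI impI, rule ccontr)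
      fix p :: nat assume p: "prime p" "p dvd n" "\<not> p dvd (n div gcd j n)"
      define a where "a = multiplicity p n"
      have a0: "a > 0" using p n by (simp add: a_def prime_multiplicity_gt_zero_iff)
      have pa: "p ^ a dvd n" unfolding a_def by (rule multiplicity_dvd)
      have m: "\<not> p dvd (n div p ^ a)" unfolding a_def by (rule multiplicity_decompose) (use n p(1) in auto)
      have "coprime p (n div p ^ a)" using p(1) m by (rule prime_imp_coprime)
      hence "coprime (p ^ a) (n div p ^ a)" by simp
      hence cop: "gcd (p ^ a) (n div p ^ a) = 1" by (rule coprime_imp_gcd_eq_1)
      have "coprime p (n div g)" using p(1) p(3) unfolding g_def by (rule prime_imp_coprime)
      hence cop2: "coprime (p ^ a) (n div g)" by simp
      have "p ^ a dvd g * (n div g)" using pa ng by metis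
      hence "p ^ a dvd g" using coprime_dvd_mult_left_iff[OF cop2] by simp
      hence "p ^ a dvd j" unfolding g_def by (meson dvd_trans gcd_dvd1)
      hence "p ^ a \<in> A" unfolding A_def unitary_dvd_def using pa cop by blast
      hence "p ^ a \<le> Max A" using finA by simp
      moreover have "p ^ a > 1" using one_less_power[OF prime_gt_1_nat[OF p(1)] a0] .
      moreover have "Max A = 1" using u unfolding ugcd_def A_def .
      ultimately show False by simp
    qed
  next
    assume H: "\<forall>p. prime p \<longrightarrow> p dvd n \<longrightarrow> p dvd (n div gcd j n)"
    have "A = {1}"
    proof (intro equalityI subsetI)
      fix d assume "d \<in> A"
      hence d0: "d dvd j" "d dvd n" "gcd d (n div d) = 1"
        unfolding A_def unitary_dvd_def by auto
      have d: "d dvd j" "d dvd n" "coprime d (n div d)"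
        using d0 by (auto intro: coprime_iff_gcd_eq_1[THEN iffD2])
      show "d \<in> {1}"
      proof (rule ccontr)
        assume "d \<notin> {1}"
        hence "d \<noteq> 1" by simp
        then obtain p where p: "prime p" "p dvd d" using prime_factor_nat by blast
        have "p dvd n" using p(2) d(2) by (rule dvd_trans)
        hence "p dvd n div g" using H p(1) unfolding g_def by blast
        moreover have "d dvd g" unfolding g_def using d(1,2) by (rule gcd_greatest)
        ultimately have "p * d dvd (n div g) * g" by (rule mult_dvd_mono)
        moreover have "(n div g) * g = n" unfolding g_def by (rule dvd_div_mult_self) (rule gcd_dvd2)
        ultimately have pdn: "p * d dvd n" by simp
        have "d \<noteq> 0" using d(1) j by auto
        hence "p dvd n div d" using pdn d(2) by (simp add: dvd_div_iff_mult)
        hence "is_unit p" using p(2) d(3) by (intro coprime_common_divisor[OF d(3) p(2)])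
        with p(1) show False by simp
      qed
    qed (use oneA in auto)
    hence "Max A = 1" by simp
    thus "ugcd j n = 1" unfolding ugcd_def A_def .
  qed
qed



lemma zeta_pow: "zeta m ^ k = cis (2 * pi * real k / real m)"
proof -
  have "zeta m = cis (2 * pi / real m)"
    unfolding zeta_def cis_conv_exp by (simp add: mult.commute)
  hence "zeta m ^ k = cis (real k * (2 * pi / real m))" by (simp add: Complex.DeMoivre)
  also have "real k * (2 * pi / real m) = 2 * pi * real k / real m" by simp
  finally show ?thesis .
qed

lemma zeta_pow_m: "m > 0 \<Longrightarrow> zeta m ^ m = 1"
  by (simp add: zeta_pow)

lemma zeta_pow_mod: "m > 0 \<Longrightarrow> zeta m ^ k = zeta m ^ (k mod m)"
proof -
  assume m: "m > 0"
  have "zeta m ^ k = zeta m ^ (m * (k div m) + k mod m)" by simp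
  also have "\<dots> = zeta m ^ (m * (k div m)) * zeta m ^ (k mod m)"
    by (rule power_add)
  also have "zeta m ^ (m * (k div m)) = (zeta m ^ m) ^ (k div m)"
    by (rule power_mult)
  finally show ?thesis using zeta_pow_m[OF m] by simp
qed

lemma zeta_div: "d dvd n \<Longrightarrow> n > 0 \<Longrightarrow> zeta n ^ (n div d) = zeta d"
proof -
  assume d: "d dvd n" and n: "n > 0"
  have d0: "d > 0" using d n by (auto intro: Nat.gr0I)
  have "real (n div d) = real n / real d" using d by (rule real_of_nat_div)
  hence "2 * pi * real (n div d) / real n = 2 * pi * real 1 / real d"
    using n d0 by (simp add: field_simps)
  thus ?thesis using zeta_pow[of n "n div d"] zeta_pow[of d 1] by simp
qed

lemma zeta_inj: assumes m: "m > 0" shows "inj_on (\<lambda>k. zeta m ^ k) {1..m}"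
proof (rule inj_onI)
  fix a b assume a: "a \<in> {1..m}" and b: "b \<in> {1..m}"
    and e: "zeta m ^ a = zeta m ^ b"
  have i: "inj_on (\<lambda>k. cis (2 * pi * real k / real m)) {..<m}"
    using Complex.bij_betw_roots_unity[OF m] by (simp add: bij_betw_def)
  have "cis (2 * pi * real (a mod m) / real m) = cis (2 * pi * real (b mod m) / real m)"
    using e zeta_pow_mod[OF m, of a] zeta_pow_mod[OF m, of b] by (simp add: zeta_pow)
  hence "a mod m = b mod m" using i m by (auto dest: inj_onD)
  moreover have "a = (if a = m then m else a mod m)" "b = (if b = m then m else b mod m)"
    using a b by auto
  ultimately show "a = b"
    using a b m by (cases "a = m"; cases "b = m") auto
qed

lemma cyclotomic_tot: "cyclotomic d = (\<Prod>k\<in>totatives d. [:- (zeta d ^ k), 1:])"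
proof -
  have t: "x \<in> {j\<in>{1..d}. gcd j d = 1} \<longleftrightarrow> x \<in> totatives d" for x
    unfolding in_totatives_iff coprime_iff_gcd_eq_1 by auto
  have "{j\<in>{1..d}. gcd j d = 1} = totatives d"
    by (simp only: set_eq_iff t simp_thms)
  thus ?thesis unfolding cyclotomic_def by (rule arg_cong)
qed

lemma cyclotomic_root:
  assumes m: "m > 0" and k: "coprime k m"
  shows "poly (cyclotomic m) (zeta m ^ k) = 0"
proof -
  define k' where "k' = (if k mod m = 0 then m else k mod m)"
  have e: "zeta m ^ k = zeta m ^ k'"
    using zeta_pow_mod[OF m, of k] zeta_pow_m[OF m] by (simp add: k'_def)
  have "k' \<in> totatives m"
  proof (cases "k mod m = 0")
    case True
    hence "m dvd k" by auto
    hence "m = 1" using coprime_common_divisor_nat[OF k _ dvd_refl] by blast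
    thus ?thesis by (simp add: k'_def)
  next
    case False
    thus ?thesis using m k by (auto simp: k'_def in_totatives_iff)
  qed
  moreover have "poly [:- (zeta m ^ k'), 1:] (zeta m ^ k) = 0" using e by simp
  ultimately show ?thesis unfolding cyclotomic_tot poly_prod
    by (intro prod_zero) auto
qed

lemma prod_lin_dvd:
  fixes p :: "complex poly"
  assumes "finite Z" "\<forall>z\<in>Z. poly p z = 0"
  shows "(\<Prod>z\<in>Z. [:-z, 1:]) dvd p"
  using assms
proof (induction Z arbitrary: p rule: finite_induct)
  case empty thus ?case by simp
next
  case (insert z Z)
  have "[:-z,1:] dvd p" using insert.prems by (simp add: poly_eq_0_iff_dvd)
  then obtain q where q: "p = [:-z,1:] * q" by (elim dvdE)
  have "\<forall>w\<in>Z. poly q w = 0"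
  proof
    fix w assume w: "w \<in> Z"
    hence "poly p w = 0" using insert.prems by simp
    hence "poly ([:-z,1:] * q) w = 0" unfolding q .
    moreover have "w \<noteq> z" using w insert.hyps by auto
    ultimately show "poly q w = 0" by simp
  qed
  hence "(\<Prod>z\<in>Z. [:-z, 1:]) dvd q" by (rule insert.IH)
  hence "[:-z,1:] * (\<Prod>z\<in>Z. [:-z, 1:]) dvd p" unfolding q by (rule mult_dvd_mono[OF dvd_refl])
  thus ?case using insert.hyps by simp
qed

lemma poly_eq_prod_lin:
  fixes p :: "complex poly"
  assumes fin: "finite Z" and roots: "\<forall>z\<in>Z. poly p z = 0"
    and deg: "degree p = card Z" and lc: "lead_coeff p = 1"
  shows "p = (\<Prod>z\<in>Z. [:-z, 1:])"
proof -
  let ?P = "\<Prod>z\<in>Z. [:-z, 1:] :: complex poly"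
  have p0: "p \<noteq> 0" using lc by auto
  obtain r where r: "p = ?P * r" using prod_lin_dvd[OF fin roots] by (elim dvdE)
  have P0: "?P \<noteq> 0" using fin by (simp add: prod_zero_iff)
  have r0: "r \<noteq> 0" using p0 r by auto
  have dP: "degree ?P = card Z" using fin by (simp add: degree_prod_sum_eq)
  have lP: "lead_coeff ?P = 1" by (simp add: lead_coeff_prod)
  have "degree p = degree ?P + degree r" using r P0 r0 by (simp add: degree_mult_eq)
  hence "degree r = 0" using deg dP by simp
  then obtain c where c: "r = [:c:]" by (elim degree_eq_zeroE)
  have "lead_coeff p = lead_coeff ?P * lead_coeff r" using r by (simp add: lead_coeff_mult)
  hence "c = 1" using lc lP c by simp
  thus ?thesis using r c by simp
qed



lemma div_div_same: "d dvd (n::nat) \<Longrightarrow> n > 0 \<Longrightarrow> n div (n div d) = d"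
  by (auto elim!: dvdE)

lemma div_dvd_same: "g dvd (n::nat) \<Longrightarrow> (n div g) dvd n"
  by (auto elim!: dvdE)

lemma ugcd_kernel:
  fixes j n :: nat
  assumes j: "j > 0" and n: "n > 0"
  shows "ugcd j n = 1 \<longleftrightarrow> sqf_kernel (n div gcd j n) = sqf_kernel n"
proof -
  define q where "q = n div gcd j n"
  have qd: "q dvd n" unfolding q_def by (rule div_dvd_same) simp
  have q0: "q > 0" using qd n by (auto intro: Nat.gr0I)
  have "sqf_kernel q = sqf_kernel n \<longleftrightarrow> prime_factors q = prime_factors n"
    using q0 n by (rule kernel_eq_iff)
  also have "\<dots> \<longleftrightarrow> (\<forall>p. prime p \<longrightarrow> p dvd n \<longrightarrow> p dvd q)"
  proof -
    have "prime_factors q = {p. prime p \<and> p dvd q}" using q0 by (simp add: prime_factors_dvd)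
    moreover have "prime_factors n = {p. prime p \<and> p dvd n}" using n by (simp add: prime_factors_dvd)
    ultimately show ?thesis using qd by (auto intro: dvd_trans)
  qed
  finally show ?thesis using ugcd_iff[OF j n] by (simp add: q_def)
qed

lemma part1:
  fixes n :: nat
  assumes n: "n > 0"
  shows "unitary_cyclotomic n = (\<Prod>d\<in>{d. d dvd n \<and> sqf_kernel d = sqf_kernel n}. cyclotomic d)"
proof -
  define D where "D = {d. d dvd n \<and> sqf_kernel d = sqf_kernel n}"
  define S where "S = {j\<in>{1..n}. ugcd j n = 1}"
  define T where "T d = {k\<in>{0<..n}. gcd k n = n div d}" for d
  define f where "f j = [:- (zeta n ^ j), 1:]" for j
  have finD: "finite D"
    by (rule finite_subset[of _ "{d. d dvd n}"]) (use n in \<open>auto simp: D_def\<close>)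
  have S_eq: "S = \<Union>(T ` D)"
  proof (intro equalityI subsetI)
    fix j assume "j \<in> S"
    hence j: "j \<ge> 1" "j \<le> n" "ugcd j n = 1" by (auto simp: S_def)
    define d where "d = n div gcd j n"
    have "d dvd n" unfolding d_def by (rule div_dvd_same) simp
    moreover have "sqf_kernel d = sqf_kernel n"
      using ugcd_kernel[of j n] j n by (simp add: d_def)
    ultimately have "d \<in> D" by (simp add: D_def)
    moreover have "n div d = gcd j n" unfolding d_def using n by (intro div_div_same) auto
    hence "j \<in> T d" using j by (simp add: T_def)
    ultimately show "j \<in> \<Union>(T ` D)" by blast
  next
    fix j assume "j \<in> \<Union>(T ` D)"
    then obtain d where d: "d \<in> D" "j \<in> T d" by blast
    hence j: "j > 0" "j \<le> n" "gcd j n = n div d" by (auto simp: T_def)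
    have dn: "d dvd n" using d by (simp add: D_def)
    have "n div gcd j n = d" using j(3) div_div_same[OF dn n] by simp
    hence "ugcd j n = 1" using ugcd_kernel[OF j(1) n] d by (simp add: D_def)
    thus "j \<in> S" using j by (simp add: S_def)
  qed
  have disj: "\<forall>d\<in>D. \<forall>d'\<in>D. d \<noteq> d' \<longrightarrow> T d \<inter> T d' = {}"
  proof (intro ballI impI)
    fix d d' assume d: "d \<in> D" "d' \<in> D" "d \<noteq> d'"
    show "T d \<inter> T d' = {}"
    proof (rule ccontr)
      assume "T d \<inter> T d' \<noteq> {}"
      then obtain j where "j \<in> T d" "j \<in> T d'" by blast
      hence "n div d = n div d'" by (simp add: T_def)
      hence "n div (n div d) = n div (n div d')" by simp
      thus False using d div_div_same[OF _ n, of d] div_div_same[OF _ n, of d'] by (simp add: D_def)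
    qed
  qed
  have inner: "(\<Prod>j\<in>T d. f j) = cyclotomic d" if d: "d \<in> D" for d
  proof -
    have dn: "d dvd n" using d by (simp add: D_def)
    have bij: "bij_betw (\<lambda>k. k * (n div d)) (totatives d) (T d)"
      using bij_betw_totatives_gcd_eq[of "n div d" n] div_div_same[OF dn n] n
      unfolding T_def by (simp add: div_dvd_same[OF dn])
    have "(\<Prod>j\<in>T d. f j) = (\<Prod>k\<in>totatives d. f (k * (n div d)))"
      by (rule prod.reindex_bij_betw[symmetric]) (rule bij)
    also have "\<dots> = (\<Prod>k\<in>totatives d. [:- (zeta d ^ k), 1:])"
    proof (rule prod.cong[OF refl])
      fix k
      have "zeta n ^ (k * (n div d)) = (zeta n ^ (n div d)) ^ k"
        by (simp add: power_mult[symmetric] mult.commute)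
      also have "\<dots> = zeta d ^ k" using zeta_div[OF dn n] by simp
      finally show "f (k * (n div d)) = [:- (zeta d ^ k), 1:]" by (simp add: f_def)
    qed
    also have "\<dots> = cyclotomic d" by (simp add: cyclotomic_tot)
    finally show ?thesis .
  qed
  have finT: "\<forall>d\<in>D. finite (T d)" by (simp add: T_def)
  have "unitary_cyclotomic n = (\<Prod>j\<in>S. f j)"
    by (simp add: unitary_cyclotomic_def S_def f_def)
  also have "\<dots> = (\<Prod>d\<in>D. \<Prod>j\<in>T d. f j)"
    unfolding S_eq by (rule prod.UNION_disjoint[OF finD finT disj])
  also have "\<dots> = (\<Prod>d\<in>D. cyclotomic d)"
    by (rule prod.cong[OF refl]) (rule inner)
  finally show ?thesis by (simp add: D_def)
qed



lemma kernel_mult_facts: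
  fixes n e :: nat
  assumes n: "n > 0" and e: "e dvd n div sqf_kernel n"
  shows "e > 0" "sqf_kernel n * e dvd n"
    "prime_factors (sqf_kernel n * e) = prime_factors n"
proof -
  define k where "k = sqf_kernel n"
  have k0: "k > 0" by (simp add: k_def kernel_pos)
  have kn: "k dvd n" unfolding k_def using n by (rule kernel_dvd)
  have nk: "n div k > 0" using kn n k0 by (auto elim!: dvdE)
  show e0: "e > 0" using e nk unfolding k_def[symmetric] by (auto intro: Nat.gr0I)
  have "k * e dvd k * (n div k)" using e unfolding k_def[symmetric] by simp
  also have "k * (n div k) = n" using kn by simp
  finally show ke: "sqf_kernel n * e dvd n" by (simp add: k_def)
  have ek: "e dvd n div k" using e by (simp add: k_def)
  have "prime_factors (k * e) = prime_factors k \<union> prime_factors e"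
    using k0 e0 by (intro prime_factors_product) auto
  also have "prime_factors e \<subseteq> prime_factors n"
    using dvd_trans[OF ek div_dvd_same[OF kn]] n
    by (intro dvd_prime_factors) auto
  hence "prime_factors k \<union> prime_factors e = prime_factors n"
    using pf_kernel[OF n] unfolding k_def[symmetric] by auto
  finally show "prime_factors (sqf_kernel n * e) = prime_factors n" by (simp add: k_def)
qed

lemma totient_kernel_mult:
  fixes n e :: nat
  assumes n: "n > 0" and e: "e dvd n div sqf_kernel n"
  shows "totient (sqf_kernel n * e) = totient (sqf_kernel n) * e"
proof -
  define k where "k = sqf_kernel n"
  have pf: "prime_factors (k * e) = prime_factors k"
    using kernel_mult_facts(3)[OF n e] pf_kernel[OF n] by (simp add: k_def)
  have "real (totient (k * e)) = real (k * e) * (\<Prod>p\<in>prime_factors k. 1 - 1 / real p)"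
    using totient_formula2[of "k * e"] pf by simp
  also have "\<dots> = real e * (real k * (\<Prod>p\<in>prime_factors k. 1 - 1 / real p))"
    by simp
  also have "\<dots> = real e * real (totient k)" using totient_formula2[of k] by simp
  finally have "real (totient (k * e)) = real (totient k * e)" by simp
  thus ?thesis unfolding k_def by (simp only: of_nat_eq_iff)
qed

lemma degree_cyclotomic: "degree (cyclotomic m) = totient m"
proof -
  have "degree (cyclotomic m) = (\<Sum>k\<in>totatives m. degree [:- (zeta m ^ k), 1:])"
    unfolding cyclotomic_tot by (rule degree_prod_sum_eq) simp
  also have "\<dots> = totient m" by (simp add: totient_def)
  finally show ?thesis .
qed

lemma lead_coeff_cyclotomic: "lead_coeff (cyclotomic m) = 1"
  unfolding cyclotomic_tot by (simp add: lead_coeff_prod)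

lemma comp_lemma:
  fixes n e :: nat
  assumes n: "n > 0" and e: "e dvd n div sqf_kernel n"
  shows "pcompose (cyclotomic (sqf_kernel n)) (monom 1 e) = cyclotomic (sqf_kernel n * e)"
proof -
  define k where "k = sqf_kernel n"
  define c where "c = k * e"
  define P where "P = pcompose (cyclotomic k) (monom 1 e)"
  have e0: "e > 0" using kernel_mult_facts(1)[OF n e] .
  have k0: "k > 0" by (simp add: k_def kernel_pos)
  have c0: "c > 0" using e0 k0 by (simp add: c_def)
  have kc: "k dvd c" by (simp add: c_def)
  define Z where "Z = (\<lambda>j. zeta c ^ j) ` totatives c"
  have inj: "inj_on (\<lambda>j. zeta c ^ j) (totatives c)"
    by (rule inj_on_subset[OF zeta_inj[OF c0]]) (auto simp: in_totatives_iff)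
  have cycZ: "cyclotomic c = (\<Prod>z\<in>Z. [:-z, 1:])"
    unfolding cyclotomic_tot Z_def prod.reindex[OF inj] by (simp add: o_def)
  have cardZ: "card Z = totient c" unfolding Z_def totient_def by (rule card_image[OF inj])
  have degP: "degree P = card Z"
    unfolding P_def cardZ c_def k_def
    by (simp add: degree_pcompose degree_cyclotomic degree_monom_eq totient_kernel_mult[OF n e])
  have lcP: "lead_coeff P = 1"
    unfolding P_def using e0 by (simp add: lead_coeff_comp degree_monom_eq lead_coeff_cyclotomic)
  have roots: "\<forall>z\<in>Z. poly P z = 0"
  proof
    fix z assume "z \<in> Z"
    then obtain j where j: "j \<in> totatives c" and z: "z = zeta c ^ j" by (auto simp: Z_def)
    have cop: "coprime j k" using j by (simp add: in_totatives_iff c_def)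
    have "z ^ e = (zeta c ^ (c div k)) ^ j"
      using k0 by (simp add: z c_def power_mult[symmetric] mult.commute)
    also have "\<dots> = zeta k ^ j" using zeta_div[OF kc c0] by simp
    finally have "poly P z = poly (cyclotomic k) (zeta k ^ j)"
      by (simp add: P_def poly_pcompose poly_monom)
    also have "\<dots> = 0" using k0 cop by (rule cyclotomic_root)
    finally show "poly P z = 0" .
  qed
  have finZ: "finite Z" by (simp add: Z_def)
  have "P = (\<Prod>z\<in>Z. [:-z, 1:])" using finZ roots degP lcP by (rule poly_eq_prod_lin)
  thus ?thesis using cycZ by (simp add: P_def c_def k_def)
qed

lemma part2:
  fixes n :: nat
  assumes n: "n > 0"
  shows "(\<Prod>d\<in>{d. d dvd (n div sqf_kernel n)}. pcompose (cyclotomic (sqf_kernel n)) (monom 1 d))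
        = (\<Prod>d\<in>{d. d dvd n \<and> sqf_kernel d = sqf_kernel n}. cyclotomic d)"
proof -
  define k where "k = sqf_kernel n"
  define E where "E = {d. d dvd (n div k)}"
  define D where "D = {d. d dvd n \<and> sqf_kernel d = sqf_kernel n}"
  have k0: "k > 0" by (simp add: k_def kernel_pos)
  have kn: "k dvd n" unfolding k_def using n by (rule kernel_dvd)
  have "(\<Prod>e\<in>E. pcompose (cyclotomic k) (monom 1 e)) = (\<Prod>e\<in>E. cyclotomic (k * e))"
    by (rule prod.cong[OF refl]) (use comp_lemma[OF n] in \<open>simp add: E_def k_def\<close>)
  also have "\<dots> = (\<Prod>d\<in>D. cyclotomic d)"
  proof (rule prod.reindex_bij_betw)
    show "bij_betw (\<lambda>e. k * e) E D"
      unfolding bij_betw_def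
    proof
      show "inj_on (\<lambda>e. k * e) E" using k0 by (auto intro: inj_onI)
      show "(\<lambda>e. k * e) ` E = D"
      proof (intro equalityI subsetI)
        fix d assume "d \<in> (\<lambda>e. k * e) ` E"
        then obtain e where e: "e dvd n div k" "d = k * e" by (auto simp: E_def)
        have "k * e dvd n" using kernel_mult_facts(2)[OF n] e by (simp add: k_def)
        moreover have "sqf_kernel (k * e) = sqf_kernel n"
        proof -
          have "k * e > 0" using kernel_mult_facts(1)[OF n] e k0 by (simp add: k_def)
          thus ?thesis using kernel_eq_iff[of "k * e" n] kernel_mult_facts(3)[OF n] e n
            by (simp add: k_def)
        qed
        ultimately show "d \<in> D" using e by (simp add: D_def)
      next
        fix d assume "d \<in> D"
        hence d: "d dvd n" "sqf_kernel d = k" by (auto simp: D_def k_def)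
        have d0: "d > 0" using d n by (auto intro: Nat.gr0I)
        have kd: "k dvd d" using kernel_dvd[OF d0] d by simp
        have "d div k dvd n div k" using kd kn d(1) by simp
        hence "d div k \<in> E" by (simp add: E_def)
        moreover have "d = k * (d div k)" using kd by simp
        ultimately show "d \<in> (\<lambda>e. k * e) ` E" by blast
      qed
    qed
  qed
  finally show ?thesis by (simp add: E_def D_def k_def)
qed


theorem theorem3p1:
  fixes n :: nat
  assumes "n \<ge> 1"
  shows "unitary_cyclotomic n = (\<Prod>d\<in>{d. d dvd n \<and> sqf_kernel d = sqf_kernel n}. cyclotomic d)
       \<and> unitary_cyclotomic n =
           (\<Prod>d\<in>{d. d dvd (n div sqf_kernel n)}. pcompose (cyclotomic (sqf_kernel n)) (monom 1 d))"
proof -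
  have n: "n > 0" using assms by simp
  have 1: "unitary_cyclotomic n = (\<Prod>d\<in>{d. d dvd n \<and> sqf_kernel d = sqf_kernel n}. cyclotomic d)"
    by (rule part1[OF n])
  show ?thesis
    by (rule conjI[OF 1]) (simp only: 1 part2[OF n])
qed

end
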